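(* Encode a configuration of the Tower of Hanoi with $n$ disks $1,\dots,n$ (disk $j$ smaller than disk $j+1$) on pegs $0,1,2$ by the word $x_1\dots x_n\in\{0,1,2\}^n$ where disk $j$ lies on peg $x_j$. Let $\Gamma_n$ be the graph with vertex set $\{0,1,2\}^n$ in which $u$ and $v$ are adjacent iff $v=a_{xy}(u)\ne u$ for some $0\le x<y\le2$, where $a_{xy}$ changes the first occurrence in $u$ of either $x$ or $y$ into the other symbol. For distinct $x,y\in\{0,1,2\}$ there is a unique shortest path in $\Gamma_n$ from $x^n$ to $y^n$ (of length $2^n-1$); for $0\le i\le 2^n-1$ let $C^{xy}_i(n)$ be the configuration at distance $i$ from $x^n$ along it. For each ordered pair $(x,y)$ of distinct elements of $\{0,1,2\}$, with $z$ the third element, define maps $q_{xy}$ from binary words to ternary words by $q_{xy}(\emptyset)=\emptyset$, $q_{xy}(0w)=x\,q_{xz}(w)$, $q_{xy}(1w)=y\,q_{zy}(w)$. For $0\le i\le2^n-1$ let $[i]_2$ be the length-$n$ binary representation of $i$, least significant digit first (padded with zeros). Then for all $n\ge1$, all distinct $x,y$, and all $0\le i\le 2^n-1$, \[q_{xy}\big([i]_2^R\big)=\big(C^{xy}_i(n)\big)^R,\] where $R$ denotes word reversal. *)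

theory Defs
  imports Main
begin

text \<open>Tower of Hanoi configurations with n disks on pegs 0,1,2: words of length n over {0,1,2};
  letter j (0-based position j) is the peg of disk j+1.\<close>

definition hwords :: "nat \<Rightarrow> nat list set" where
  "hwords n = {w. length w = n \<and> set w \<subseteq> {0,1,2}}"

fun swap_first :: "nat \<Rightarrow> nat \<Rightarrow> nat list \<Rightarrow> nat list" where
  "swap_first x y [] = []"
| "swap_first x y (c # w) =
     (if c = x then y # w else if c = y then x # w else c # swap_first x y w)"

definition gamma_adj :: "nat \<Rightarrow> nat list \<Rightarrow> nat list \<Rightarrow> bool" where
  "gamma_adj n u v \<longleftrightarrow> u \<in> hwords n \<and> v \<in> hwords n \<and>
     (\<exists>x y. x < y \<and> y \<le> 2 \<and> v = swap_first x y u \<and> v \<noteq> u)"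

definition gamma_path :: "nat \<Rightarrow> nat list \<Rightarrow> nat list \<Rightarrow> nat list list \<Rightarrow> bool" where
  "gamma_path n s t p \<longleftrightarrow> p \<noteq> [] \<and> hd p = s \<and> last p = t \<and> set p \<subseteq> hwords n \<and>
     distinct p \<and> (\<forall>k < length p - 1. gamma_adj n (p ! k) (p ! Suc k))"

definition gamma_shortest_path :: "nat \<Rightarrow> nat list \<Rightarrow> nat list \<Rightarrow> nat list list \<Rightarrow> bool" where
  "gamma_shortest_path n s t p \<longleftrightarrow> gamma_path n s t p \<and>
     (\<forall>p'. gamma_path n s t p' \<longrightarrow> length p \<le> length p')"

definition hanoi_C :: "nat \<Rightarrow> nat \<Rightarrow> nat \<Rightarrow> nat \<Rightarrow> nat list" where
  "hanoi_C x y n i =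
     (THE p. gamma_shortest_path n (replicate n x) (replicate n y) p) ! i"

text \<open>The maps q_xy on binary words (digits 0/1); z = 3 - x - y is the third peg.\<close>
fun qmap :: "nat \<Rightarrow> nat \<Rightarrow> nat list \<Rightarrow> nat list" where
  "qmap x y [] = []"
| "qmap x y (b # w) =
     (if b = 0 then x # qmap x (3 - x - y) w else y # qmap (3 - x - y) y w)"

definition bin_rep :: "nat \<Rightarrow> nat \<Rightarrow> nat list" where
  "bin_rep n i = map (\<lambda>k. i div 2 ^ k mod 2) [0..<n]"

end

theory Submission
  imports Defs
begin

fun walk :: "nat \<Rightarrow> nat list list \<Rightarrow> bool" where
  "walk n [] = False"
| "walk n [u] = (u \<in> hwords n)"
| "walk n (u # v # p) = (gamma_adj n u v \<and> walk n (v # p))"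

fun H :: "nat \<Rightarrow> nat \<Rightarrow> nat \<Rightarrow> nat list list" where
  "H x y 0 = [[]]"
| "H x y (Suc n) = map (\<lambda>w. w @ [x]) (H x (3 - x - y) n) @ map (\<lambda>w. w @ [y]) (H (3 - x - y) y n)"

lemma hwords_snoc: "a @ [c] \<in> hwords (Suc n) \<longleftrightarrow> a \<in> hwords n \<and> c \<le> 2"
  by (auto simp: hwords_def)

lemma swap_snoc: "swap_first x y (a @ [c]) = (if x \<in> set a \<or> y \<in> set a then swap_first x y a @ [c]
   else a @ [if c = x then y else if c = y then x else c])"
  by (induction a) auto

lemma swap_id: "x \<notin> set a \<Longrightarrow> y \<notin> set a \<Longrightarrow> swap_first x y a = a"
  by (induction a) auto

lemma adj_same: "gamma_adj (Suc n) (a @ [c]) (b @ [c]) \<Longrightarrow> gamma_adj n a b"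
proof -
  assume A: "gamma_adj (Suc n) (a @ [c]) (b @ [c])"
  then obtain x y where xy: "x < y" "y \<le> 2" "b @ [c] = swap_first x y (a @ [c])" "b \<noteq> a"
    and h: "a \<in> hwords n" "b \<in> hwords n"
    unfolding gamma_adj_def hwords_snoc by auto
  have "x \<in> set a \<or> y \<in> set a"
  proof (rule ccontr)
    assume "\<not> ?thesis"
    hence "b @ [c] = a @ [if c = x then y else if c = y then x else c]" using xy(3) by (simp add: swap_snoc)
    thus False using xy(4) by simp
  qed
  hence "b = swap_first x y a" using xy(3) by (simp add: swap_snoc)
  thus ?thesis using xy h unfolding gamma_adj_def by auto
qed

lemma adj_same_rev: "gamma_adj n a b \<Longrightarrow> c \<le> 2 \<Longrightarrow> gamma_adj (Suc n) (a @ [c]) (b @ [c])"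
proof -
  assume A: "gamma_adj n a b" and c: "c \<le> 2"
  then obtain x y where xy: "x < y" "y \<le> 2" "b = swap_first x y a" "b \<noteq> a"
    and h: "a \<in> hwords n" "b \<in> hwords n"
    unfolding gamma_adj_def by auto
  have "x \<in> set a \<or> y \<in> set a" using xy swap_id by metis
  hence "b @ [c] = swap_first x y (a @ [c])" using xy(3) by (simp add: swap_snoc)
  thus ?thesis using xy h c unfolding gamma_adj_def hwords_snoc
    by (intro conjI exI[of _ x] exI[of _ y]) auto
qed


lemma adj_diff: "gamma_adj (Suc n) (a @ [c]) (b @ [d]) \<Longrightarrow> c \<noteq> d \<Longrightarrow>
   a = b \<and> a = replicate n (3 - c - d) \<and> c \<le> 2 \<and> d \<le> 2"
proof -
  assume A: "gamma_adj (Suc n) (a @ [c]) (b @ [d])" and cd: "c \<noteq> d"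
  then obtain x y where xy: "x < y" "y \<le> 2" "b @ [d] = swap_first x y (a @ [c])"
    and h: "a \<in> hwords n" "c \<le> 2" "d \<le> 2"
    unfolding gamma_adj_def hwords_snoc by auto
  have nin: "x \<notin> set a \<and> y \<notin> set a"
    using xy(3) cd by (auto simp: swap_snoc split: if_splits)
  hence e: "b = a" "d = (if c = x then y else if c = y then x else c)"
    using xy(3) by (auto simp: swap_snoc)
  have cdxy: "(c = x \<and> d = y) \<or> (c = y \<and> d = x)" using e(2) cd by (auto split: if_splits)
  have "\<forall>e \<in> set a. e = 3 - c - d"
  proof
    fix e assume "e \<in> set a"
    hence "e \<le> 2" "e \<noteq> x" "e \<noteq> y" using h nin unfolding hwords_def by auto
    thus "e = 3 - c - d" using cdxy xy by auto
  qed
  hence "a = replicate n (3 - c - d)" using h(1) unfolding hwords_def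
    by (simp add: replicate_eqI)
  thus ?thesis using e h by auto
qed

lemma walk_ne: "walk n p \<Longrightarrow> p \<noteq> []" by (cases p) auto

lemma walk_set: "walk n p \<Longrightarrow> set p \<subseteq> hwords n"
  by (induction n p rule: walk.induct) (auto simp: gamma_adj_def)

lemma walk_append: "a \<noteq> [] \<Longrightarrow> b \<noteq> [] \<Longrightarrow>
   walk n (a @ b) \<longleftrightarrow> walk n a \<and> walk n b \<and> gamma_adj n (last a) (hd b)"
proof (induction a)
  case Nil then show ?case by simp
next
  case (Cons u a)
  show ?case
  proof (cases "a = []")
    case True
    then show ?thesis using Cons.prems by (cases b) (auto simp: gamma_adj_def)
  next
    case False
    then obtain v a' where "a = v # a'" by (cases a) auto
    then show ?thesis using Cons False by auto
  qed
qed

lemma walk_nth: "walk n p \<longleftrightarrow> p \<noteq> [] \<and> set p \<subseteq> hwords n \<and>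
   (\<forall>k < length p - 1. gamma_adj n (p ! k) (p ! Suc k))"
proof (induction n p rule: walk.induct)
  case (3 n u v p)
  have "(\<forall>k < length (u # v # p) - 1. gamma_adj n ((u # v # p) ! k) ((u # v # p) ! Suc k)) \<longleftrightarrow>
        gamma_adj n u v \<and> (\<forall>k < length (v # p) - 1. gamma_adj n ((v # p) ! k) ((v # p) ! Suc k))"
    by (auto simp: less_Suc_eq_0_disj)
  then show ?case using 3 by (auto simp: gamma_adj_def)
qed auto

lemma walk_proj: "walk (Suc n) p \<Longrightarrow> \<forall>w\<in>set p. last w = c \<Longrightarrow> walk n (map butlast p)"
proof (induction "Suc n" p rule: walk.induct)
  case (2 u)
  then show ?case by (auto simp: hwords_def dest!: in_set_butlastD)
next
  case (3 u v p)
  have "u \<noteq> []" "v \<noteq> []" using 3(2) by (auto simp: gamma_adj_def hwords_def)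
  hence "u = butlast u @ [c]" "v = butlast v @ [c]" using 3(3)
    by (metis append_butlast_last_id list.set_intros(1,2))+
  moreover have "gamma_adj (Suc n) u v" using 3(2) by simp
  ultimately have "gamma_adj n (butlast u) (butlast v)" using adj_same by metis
  then show ?case using 3 by auto
qed auto

lemma proj_eq: "set p \<subseteq> hwords (Suc n) \<Longrightarrow> \<forall>w\<in>set p. last w = c \<Longrightarrow>
   p = map (\<lambda>w. w @ [c]) (map butlast p)"
proof (induction p)
  case (Cons u p)
  have "u \<noteq> []" using Cons.prems by (auto simp: hwords_def)
  then show ?case using Cons by (auto simp: append_butlast_last_id)
qed simp

lemma third: "(x::nat) \<le> 2 \<Longrightarrow> y \<le> 2 \<Longrightarrow> x \<noteq> y \<Longrightarrow>
   3 - x - y \<le> 2 \<and> 3 - x - y \<noteq> x \<and> 3 - x - y \<noteq> y"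
  by arith

lemma H_len: "length (H x y n) = 2 ^ n"
  by (induction n arbitrary: x y) auto

lemma H_ne: "H x y n \<noteq> []"
  using H_len[of x y n] by auto

lemma H_hd: "hd (H x y n) = replicate n x"
  by (induction n arbitrary: x y) (auto simp: H_ne replicate_append_same hd_append last_append hd_map last_map)

lemma H_last: "last (H x y n) = replicate n y"
  by (induction n arbitrary: x y) (auto simp: H_ne replicate_append_same hd_append last_append hd_map last_map)

lemma walk_map: "walk n A \<Longrightarrow> c \<le> 2 \<Longrightarrow> walk (Suc n) (map (\<lambda>w. w @ [c]) A)"
  by (induction n A rule: walk.induct) (auto simp: hwords_snoc adj_same_rev)

lemma rep_hwords: "z \<le> 2 \<Longrightarrow> replicate n z \<in> hwords n"
  by (auto simp: hwords_def)

lemma adj_mid: "(x::nat) \<le> 2 \<Longrightarrow> y \<le> 2 \<Longrightarrow> x \<noteq> y \<Longrightarrow>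
   gamma_adj (Suc n) (replicate n (3 - x - y) @ [x]) (replicate n (3 - x - y) @ [y])"
proof -
  assume a: "x \<le> 2" "y \<le> 2" "x \<noteq> y"
  let ?z = "3 - x - y"
  have z: "?z \<le> 2" "?z \<noteq> x" "?z \<noteq> y" using third[OF a] by auto
  have "swap_first (min x y) (max x y) (replicate n ?z @ [x]) = replicate n ?z @ [y]"
    using z a by (auto simp: swap_snoc min_def max_def)
  thus ?thesis unfolding gamma_adj_def hwords_snoc using a z rep_hwords
    by (intro conjI exI[of _ "min x y"] exI[of _ "max x y"]) (auto simp: min_def max_def)
qed

lemma H_walk: "x \<le> 2 \<Longrightarrow> y \<le> 2 \<Longrightarrow> x \<noteq> y \<Longrightarrow> walk n (H x y n)"
proof (induction n arbitrary: x y)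
  case 0 then show ?case by (simp add: hwords_def)
next
  case (Suc n)
  note t = third[OF Suc.prems]
  have "walk n (H x (3 - x - y) n)" "walk n (H (3 - x - y) y n)" using Suc t by auto
  hence w: "walk (Suc n) (map (\<lambda>w. w @ [x]) (H x (3 - x - y) n))"
    "walk (Suc n) (map (\<lambda>w. w @ [y]) (H (3 - x - y) y n))" using walk_map Suc.prems by auto
  have l: "last (map (\<lambda>w. w @ [x]) (H x (3 - x - y) n)) = replicate n (3 - x - y) @ [x]"
    by (simp add: last_map H_ne H_last)
  have h: "hd (map (\<lambda>w. w @ [y]) (H (3 - x - y) y n)) = replicate n (3 - x - y) @ [y]"
    by (simp add: hd_map H_ne H_hd)
  show ?case using walk_append[of "map (\<lambda>w. w @ [x]) (H x (3 - x - y) n)"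
      "map (\<lambda>w. w @ [y]) (H (3 - x - y) y n)" "Suc n"] w l h adj_mid[OF Suc.prems, of n]
    by (simp add: H_ne)
qed

lemma H_distinct: "x \<le> 2 \<Longrightarrow> y \<le> 2 \<Longrightarrow> x \<noteq> y \<Longrightarrow> distinct (H x y n)"
proof (induction n arbitrary: x y)
  case (Suc n)
  note t = third[OF Suc.prems]
  have "inj (\<lambda>w::nat list. w @ [c])" for c by (auto simp: inj_def)
  then show ?case using Suc t by (auto simp: distinct_map inj_on_def)
qed simp

lemma bl_rep: "butlast (replicate (Suc n) x) = replicate n x"
  by (induction n) auto

lemma word_snoc: "w \<in> hwords (Suc n) \<Longrightarrow> w = butlast w @ [last w]"
  by (cases w rule: rev_cases) (auto simp: hwords_def)

lemma main_L: "walk n p \<Longrightarrow> x \<le> 2 \<Longrightarrow> y \<le> 2 \<Longrightarrow> x \<noteq> y \<Longrightarrow>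
   hd p = replicate n x \<Longrightarrow> last p = replicate n y \<Longrightarrow>
   2 ^ n \<le> length p \<and> (length p = 2 ^ n \<longrightarrow> p = H x y n)"
proof (induction n arbitrary: x y p)
  case 0
  have "\<forall>w\<in>set p. w = []" using walk_set[OF 0(1)] by (auto simp: hwords_def)
  then show ?case using walk_ne[OF 0(1)] by (cases p) auto
next
  case (Suc n)
  define P where "P = (\<lambda>w::nat list. last w = x)"
  define Q where "Q = (\<lambda>w::nat list. last w = y)"
  define p1 where "p1 = takeWhile P p"
  define p2 where "p2 = dropWhile P p"
  have pne: "p \<noteq> []" using walk_ne[OF Suc.prems(1)] .
  have sp: "set p \<subseteq> hwords (Suc n)" using walk_set[OF Suc.prems(1)] .
  have hdP: "P (hd p)" using Suc.prems(5) by (simp add: P_def)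
  have lastQ: "Q (last p)" using Suc.prems(6) by (simp add: Q_def)
  have lastnP: "\<not> P (last p)" using lastQ Suc.prems(4) by (simp add: P_def Q_def)
  have pp: "p = p1 @ p2" by (simp add: p1_def p2_def)
  have p1ne: "p1 \<noteq> []" using pne hdP by (cases p) (auto simp: p1_def)
  have p1P: "\<forall>w\<in>set p1. P w" by (auto simp: p1_def dest: set_takeWhileD)
  have p2ne: "p2 \<noteq> []"
  proof
    assume "p2 = []"
    hence "last p \<in> set p1" using pp pne by simp
    thus False using p1P lastnP by auto
  qed
  have hdp2: "\<not> P (hd p2)" using p2ne hd_dropWhile unfolding p2_def by metis
  have wp12: "walk (Suc n) p1" "walk (Suc n) p2" "gamma_adj (Suc n) (last p1) (hd p2)"
    using walk_append[OF p1ne p2ne, of "Suc n"] Suc.prems(1) pp by auto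
  define q2 where "q2 = rev (takeWhile Q (rev p2))"
  define q1 where "q1 = rev (dropWhile Q (rev p2))"
  have p2q: "p2 = q1 @ q2" unfolding q1_def q2_def
    by (metis rev_append rev_rev_ident takeWhile_dropWhile_id)
  have lastp2: "last p2 = last p" using pp p2ne by simp
  have q2ne: "q2 \<noteq> []"
  proof -
    obtain r where "rev p2 = last p2 # r" using p2ne by (cases "rev p2") (auto simp: hd_rev[symmetric])
    thus ?thesis using lastQ lastp2 by (simp add: q2_def)
  qed
  have q2Q: "\<forall>w\<in>set q2. Q w" by (auto simp: q2_def dest: set_takeWhileD)
  have q1c: "q1 \<noteq> [] \<Longrightarrow> \<not> Q (last q1)"
    unfolding q1_def using hd_dropWhile by (metis last_rev rev_is_Nil_conv)
  define pre where "pre = p1 @ q1"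
  have ppre: "p = pre @ q2" using pp p2q by (simp add: pre_def)
  have prene: "pre \<noteq> []" using p1ne by (simp add: pre_def)
  have lastpre: "\<not> Q (last pre)"
  proof (cases "q1 = []")
    case True
    hence "last pre = last p1" by (simp add: pre_def)
    moreover have "P (last p1)" using p1P p1ne by simp
    ultimately show ?thesis using Suc.prems(4) by (simp add: P_def Q_def)
  next
    case False
    then show ?thesis using q1c by (simp add: pre_def)
  qed
  have wpq: "walk (Suc n) pre" "walk (Suc n) q2" "gamma_adj (Suc n) (last pre) (hd q2)"
    using walk_append[OF prene q2ne, of "Suc n"] Suc.prems(1) ppre by auto
  define c where "c = last (hd p2)"
  have sp1: "set p1 \<subseteq> hwords (Suc n)" using sp pp by auto
  have sp2: "set p2 \<subseteq> hwords (Suc n)" using sp pp by auto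
  have e1: "last p1 = butlast (last p1) @ [x]"
    using word_snoc[of "last p1" n] sp1 last_in_set[OF p1ne] p1P by (auto simp: P_def)
  have e2: "hd p2 = butlast (hd p2) @ [c]"
    using word_snoc[of "hd p2" n] sp2 hd_in_set[OF p2ne] by (auto simp: c_def)
  have cx: "c \<noteq> x" using hdp2 by (simp add: P_def c_def)
  have ad1: "butlast (last p1) = butlast (hd p2) \<and> butlast (last p1) = replicate n (3 - x - c) \<and> c \<le> 2"
    using adj_diff[of n "butlast (last p1)" x "butlast (hd p2)" c] wp12(3) e1 e2 cx by auto
  have wb1: "walk n (map butlast p1)" using walk_proj[OF wp12(1), of x] p1P by (auto simp: P_def)
  have hd1: "hd (map butlast p1) = replicate n x"
    using p1ne pp Suc.prems(5) by (simp add: hd_map bl_rep del: replicate_Suc)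
  have last1: "last (map butlast p1) = replicate n (3 - x - c)"
    using p1ne ad1 by (metis last_map)
  note t1 = third[OF Suc.prems(2) ad1[THEN conjunct2, THEN conjunct2] cx[symmetric]]
  have IH1: "2 ^ n \<le> length p1 \<and> (length p1 = 2 ^ n \<longrightarrow> map butlast p1 = H x (3 - x - c) n)"
    using Suc.IH[OF wb1 Suc.prems(2) _ _ hd1 last1] t1 by auto
  define d where "d = last (last pre)"
  have spre: "set pre \<subseteq> hwords (Suc n)" using sp ppre by auto
  have sq2: "set q2 \<subseteq> hwords (Suc n)" using sp ppre by auto
  have f1: "last pre = butlast (last pre) @ [d]"
    using word_snoc[of "last pre" n] spre last_in_set[OF prene] by (auto simp: d_def)
  have f2: "hd q2 = butlast (hd q2) @ [y]"
    using word_snoc[of "hd q2" n] sq2 hd_in_set[OF q2ne] q2Q by (auto simp: Q_def)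
  have dy: "d \<noteq> y" using lastpre by (simp add: Q_def d_def)
  have ad2: "butlast (last pre) = butlast (hd q2) \<and> butlast (last pre) = replicate n (3 - d - y) \<and> d \<le> 2"
    using adj_diff[of n "butlast (last pre)" d "butlast (hd q2)" y] wpq(3) f1 f2 dy by auto
  have wb2: "walk n (map butlast q2)" using walk_proj[OF wpq(2), of y] q2Q by (auto simp: Q_def)
  have hd2: "hd (map butlast q2) = replicate n (3 - d - y)"
    using q2ne ad2 by (metis hd_map)
  have last2: "last (map butlast q2) = replicate n y"
    using q2ne ppre Suc.prems(6) by (simp add: last_map bl_rep del: replicate_Suc)
  note t2 = third[OF ad2[THEN conjunct2, THEN conjunct2] Suc.prems(3) dy]
  have IH2: "2 ^ n \<le> length q2 \<and> (length q2 = 2 ^ n \<longrightarrow> map butlast q2 = H (3 - d - y) y n)"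
    using Suc.IH[OF wb2 _ Suc.prems(3) _ hd2 last2] t2 by auto
  have len: "length p = length p1 + length q1 + length q2" using ppre by (simp add: pre_def)
  show ?case
  proof
    show "2 ^ Suc n \<le> length p" using len IH1 IH2 by simp
  next
    show "length p = 2 ^ Suc n \<longrightarrow> p = H x y (Suc n)"
    proof
      assume L: "length p = 2 ^ Suc n"
      hence s: "length p1 + length q1 + length q2 = 2 * 2 ^ n" using len by simp
      have b: "2 ^ n \<le> length p1" "2 ^ n \<le> length q2" using IH1 IH2 by auto
      have ll: "length q1 = 0" and l1: "length p1 = 2 ^ n" and l2: "length q2 = 2 ^ n"
        using s b by linarith+
      have q1e: "q1 = []" using ll by simp
      have "pre = p1" using q1e by (simp add: pre_def)
      hence dx: "d = x" using p1P p1ne by (simp add: d_def P_def)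
      have "hd p2 = hd q2" using p2q q1e by simp
      hence cy: "c = y" using q2Q q2ne by (simp add: c_def Q_def)
      have m1: "map butlast p1 = H x (3 - x - y) n" using IH1 l1 cy by simp
      have m2: "map butlast q2 = H (3 - x - y) y n" using IH2 l2 dx by simp
      have "p1 = map (\<lambda>w. w @ [x]) (map butlast p1)"
        using proj_eq[OF sp1] p1P by (auto simp: P_def)
      moreover have "q2 = map (\<lambda>w. w @ [y]) (map butlast q2)"
        using proj_eq[OF sq2] q2Q by (auto simp: Q_def)
      ultimately show "p = H x y (Suc n)" using ppre q1e m1 m2
        by (simp add: pre_def)
    qed
  qed
qed

lemma bin_rep_Suc: "bin_rep (Suc n) i = bin_rep n i @ [i div 2 ^ n mod 2]"
  by (simp add: bin_rep_def)

lemma digit_shift: "k < n \<Longrightarrow> 2 ^ n \<le> i \<Longrightarrow> (i - 2 ^ n) div 2 ^ k mod 2 = i div 2 ^ k mod (2::nat)"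
proof -
  assume k: "k < n" and i: "2 ^ n \<le> i"
  have "(2::nat) ^ n = 2 ^ (n - k) * 2 ^ k" using k by (simp add: power_add[symmetric])
  hence "i = (i - 2 ^ n) + 2 ^ (n - k) * 2 ^ k" using i by simp
  hence "i div 2 ^ k = 2 ^ (n - k) + (i - 2 ^ n) div 2 ^ k"
    by (metis div_mult_self1 power_not_zero zero_neq_numeral)
  moreover have "(2::nat) ^ (n - k) = 2 * 2 ^ (n - k - 1)" using k
    by (metis Suc_diff_Suc diff_Suc_1 minus_nat.diff_0 power_Suc zero_less_diff)
  ultimately show ?thesis by simp
qed

lemma bin_rep_shift: "2 ^ n \<le> i \<Longrightarrow> bin_rep n (i - 2 ^ n) = bin_rep n i"
  unfolding bin_rep_def using digit_shift by auto

lemma qmap_H: "i < 2 ^ n \<Longrightarrow> x \<le> 2 \<Longrightarrow> y \<le> 2 \<Longrightarrow> x \<noteq> y \<Longrightarrow>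
   qmap x y (rev (bin_rep n i)) = rev (H x y n ! i)"
proof (induction n arbitrary: x y i)
  case 0 then show ?case by (simp add: bin_rep_def)
next
  case (Suc n)
  note t = third[OF Suc.prems(2-4)]
  show ?case
  proof (cases "i < 2 ^ n")
    case True
    hence d: "i div 2 ^ n mod 2 = 0" by simp
    have "qmap x (3 - x - y) (rev (bin_rep n i)) = rev (H x (3 - x - y) n ! i)"
      using Suc.IH[OF True] Suc.prems t by auto
    then show ?thesis using True d by (simp add: bin_rep_Suc nth_append H_len)
  next
    case False
    hence i2: "i - 2 ^ n < 2 ^ n" using Suc.prems(1) by simp
    have d: "i div 2 ^ n mod 2 = 1" using False Suc.prems(1)
      by (simp add: div_if le_div_geq)
    have "qmap (3 - x - y) y (rev (bin_rep n (i - 2 ^ n))) = rev (H (3 - x - y) y n ! (i - 2 ^ n))"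
      using Suc.IH[OF i2] Suc.prems t by auto
    then show ?thesis using False d bin_rep_shift[of n i] i2
      by (simp add: bin_rep_Suc nth_append H_len)
  qed
qed

theorem mainTheorem13:
  fixes n x y i :: nat
  assumes "n \<ge> 1" and "x \<le> 2" and "y \<le> 2" and "x \<noteq> y" and "i \<le> 2 ^ n - 1"
  shows "qmap x y (rev (bin_rep n i)) = rev (hanoi_C x y n i)"
proof -
  have "0 < (2::nat) ^ n" by simp
  hence i: "i < 2 ^ n" using assms(5) by linarith
  have wH: "walk n (H x y n)" using H_walk assms by auto
  have gp: "gamma_path n (replicate n x) (replicate n y) (H x y n)"
    using wH H_distinct[OF assms(2-4)] H_hd H_last unfolding gamma_path_def walk_nth by auto
  have gsp: "gamma_shortest_path n (replicate n x) (replicate n y) (H x y n)"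
    unfolding gamma_shortest_path_def
  proof (intro conjI allI impI gp)
    fix p' assume "gamma_path n (replicate n x) (replicate n y) p'"
    hence "walk n p'" "hd p' = replicate n x" "last p' = replicate n y"
      unfolding gamma_path_def walk_nth by auto
    thus "length (H x y n) \<le> length p'" using main_L assms H_len by metis
  qed
  have uniq: "p = H x y n" if "gamma_shortest_path n (replicate n x) (replicate n y) p" for p
  proof -
    have g: "gamma_path n (replicate n x) (replicate n y) p" and le: "length p \<le> length (H x y n)"
      using that gp unfolding gamma_shortest_path_def by auto
    hence "walk n p" "hd p = replicate n x" "last p = replicate n y"
      unfolding gamma_path_def walk_nth by auto
    hence "2 ^ n \<le> length p \<and> (length p = 2 ^ n \<longrightarrow> p = H x y n)" using main_L assms by blast
    thus ?thesis using le H_len by (metis le_antisym)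
  qed
  have "(THE p. gamma_shortest_path n (replicate n x) (replicate n y) p) = H x y n"
    using gsp uniq by (rule the_equality)
  thus ?thesis unfolding hanoi_C_def using qmap_H[OF i assms(2-4)] by simp
qed

end
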